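(* Let $0<p\leq1/2$ and $\ell\geq0$, and let $H$ be a finite bipartite graph with bipartition $X\cup Y$ such that $d_H(x,x')\leq\ell$ for all distinct $x,x'\in X$. Let $A$ be a $p$-random subset of $Y$ and let $S=|X\setminus N_H(A)|$. Then for all $r\geq0$, \[ \mathbb{P}\big(S-\mathbb{E}[S]\geq r\big)\leq\exp\left(-\frac{r^2}{4p\,(e_H(X,Y)+\ell|X|^2)}\right). \]
   Context: A $p$-random subset includes each element independently with probability $p$. $d_H(x,x')=|N_H(x)\cap N_H(x')|$ is the codegree, $N_H(A)=\bigcup_{a\in A}N_H(a)$, and $e_H(X,Y)$ is the number of edges of $H$ between $X$ and $Y$. *)

theory Defs
  imports "HOL-Probability.Probability"
begin

text \<open>A finite bipartite graph H with parts X and Y is given by an edge set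
  E \<subseteq> X \<times> Y (pair (x,y) = edge between x \<in> X and y \<in> Y).\<close>

definition nbhd :: "('a \<times> 'a) set \<Rightarrow> 'a \<Rightarrow> 'a set" where
  "nbhd E x = {y. (x, y) \<in> E}"

definition codegree :: "('a \<times> 'a) set \<Rightarrow> 'a \<Rightarrow> 'a \<Rightarrow> nat" where
  "codegree E x x' = card (nbhd E x \<inter> nbhd E x')"

definition nbhd_set :: "('a \<times> 'a) set \<Rightarrow> 'a set \<Rightarrow> 'a set" where
  "nbhd_set E A = {x. \<exists>a\<in>A. (x, a) \<in> E}"

definition random_subset :: "'a set \<Rightarrow> real \<Rightarrow> 'a set pmf" where
  "random_subset Y p = map_pmf (\<lambda>f. {y\<in>Y. f y}) (Pi_pmf Y False (\<lambda>_. bernoulli_pmf p))"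

end

theory Submission
  imports Defs
begin

definition wt :: "'a set \<Rightarrow> real \<Rightarrow> 'a set \<Rightarrow> real" where
  "wt Y p A = p ^ card A * (1 - p) ^ card (Y - A)"

lemma set_rs: "set_pmf (random_subset Y p) \<subseteq> Pow Y"
  unfolding random_subset_def by auto

lemma pmf_rs:
  assumes "finite Y" "A \<subseteq> Y" "0 \<le> p" "p \<le> 1"
  shows "pmf (random_subset Y p) A = wt Y p A"
proof -
  let ?M = "Pi_pmf Y False (\<lambda>_. bernoulli_pmf p)"
  let ?g = "\<lambda>f. {y\<in>Y. f y}"
  let ?f0 = "\<lambda>x. x \<in> A"
  let ?Q = "{f. \<forall>x. x \<notin> Y \<longrightarrow> f x = False}"
  have sQ: "set_pmf ?M \<subseteq> ?Q" by (rule set_Pi_pmf_subset[OF assms(1)])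
  have "pmf (random_subset Y p) A = measure ?M (?g -` {A})"
    unfolding random_subset_def by (simp add: pmf_map)
  also have "\<dots> = measure ?M (?g -` {A} \<inter> set_pmf ?M)"
    by (simp add: measure_Int_set_pmf)
  also have "?g -` {A} \<inter> set_pmf ?M = (?g -` {A} \<inter> ?Q) \<inter> set_pmf ?M"
    using sQ by blast
  also have "measure ?M \<dots> = measure ?M (?g -` {A} \<inter> ?Q)"
    by (simp add: measure_Int_set_pmf)
  also have "?g -` {A} \<inter> ?Q = {?f0}"
    using assms(2) by (auto simp: fun_eq_iff)
  also have "measure ?M {?f0} = pmf ?M ?f0" by (simp add: measure_pmf_single)
  also have "pmf ?M ?f0 = (\<Prod>x\<in>Y. pmf (bernoulli_pmf p) (x \<in> A))"
    using assms by (subst pmf_Pi') auto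
  also have "\<dots> = (\<Prod>x\<in>Y. if x \<in> A then p else 1 - p)"
    using assms by (intro prod.cong) auto
  also have "\<dots> = wt Y p A"
    unfolding wt_def using assms
    by (subst prod.If_cases) (auto simp: Int_absorb1 Diff_eq)
  finally show ?thesis .
qed

definition EE :: "'a set \<Rightarrow> real \<Rightarrow> ('a set \<Rightarrow> real) \<Rightarrow> real" where
  "EE Y p g = (\<Sum>A\<in>Pow Y. wt Y p A * g A)"

lemma wt_insert0:
  assumes "finite Y" "y \<notin> Y" "A \<subseteq> Y"
  shows "wt (insert y Y) p A = (1 - p) * wt Y p A"
proof -
  have "insert y Y - A = insert y (Y - A)" using assms by auto
  hence "card (insert y Y - A) = Suc (card (Y - A))" using assms by simp
  thus ?thesis unfolding wt_def by simp
qed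

lemma wt_insert1:
  assumes "finite Y" "y \<notin> Y" "A \<subseteq> Y"
  shows "wt (insert y Y) p (insert y A) = p * wt Y p A"
proof -
  have "insert y Y - insert y A = Y - A" using assms by auto
  moreover have "card (insert y A) = Suc (card A)" using assms finite_subset[OF assms(3)]
    by (subst card_insert_disjoint) auto
  ultimately show ?thesis unfolding wt_def by simp
qed

lemma EE_insert:
  assumes "finite Y" "y \<notin> Y"
  shows "EE (insert y Y) p g = (1 - p) * EE Y p g + p * EE Y p (\<lambda>A. g (insert y A))"
proof -
  have fin: "finite (Pow Y)" "finite (insert y ` Pow Y)" using assms by auto
  have disj: "Pow Y \<inter> insert y ` Pow Y = {}" using assms by auto
  have inj: "inj_on (insert y) (Pow Y)"
  proof (rule inj_onI)
    fix a b assume "a \<in> Pow Y" "b \<in> Pow Y" "insert y a = insert y b"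
    then show "a = b" using assms by (metis Pow_iff insert_ident subsetD)
  qed
  have "EE (insert y Y) p g = (\<Sum>A\<in>Pow Y. wt (insert y Y) p A * g A)
        + (\<Sum>A\<in>insert y ` Pow Y. wt (insert y Y) p A * g A)"
    unfolding EE_def Pow_insert by (rule sum.union_disjoint[OF fin disj])
  also have "(\<Sum>A\<in>Pow Y. wt (insert y Y) p A * g A) = (1 - p) * EE Y p g"
    unfolding EE_def sum_distrib_left
    by (intro sum.cong) (use assms wt_insert0[OF assms] in auto)
  also have "(\<Sum>A\<in>insert y ` Pow Y. wt (insert y Y) p A * g A)
      = (\<Sum>A\<in>Pow Y. wt (insert y Y) p (insert y A) * g (insert y A))"
    by (rule sum.reindex[OF inj, unfolded comp_def])
  also have "\<dots> = p * EE Y p (\<lambda>A. g (insert y A))"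
    unfolding EE_def sum_distrib_left
    by (intro sum.cong) (use assms wt_insert1[OF assms] in auto)
  finally show ?thesis .
qed

lemma EE_const:
  assumes "finite Y"
  shows "EE Y p (\<lambda>_. c) = c"
  using assms
proof (induction Y rule: finite_induct)
  case empty
  then show ?case by (simp add: EE_def wt_def)
next
  case (insert y Y)
  then show ?case by (simp add: EE_insert algebra_simps)
qed

lemma EE_lin: "EE Y p (\<lambda>A. a * g A + b * h A) = a * EE Y p g + b * EE Y p h"
  unfolding EE_def by (simp add: sum.distrib sum_distrib_left algebra_simps)

lemma EE_cmult: "EE Y p (\<lambda>A. a * g A) = a * EE Y p g"
  unfolding EE_def by (simp add: sum_distrib_left algebra_simps)

lemma wt_nonneg: "0 \<le> p \<Longrightarrow> p \<le> 1 \<Longrightarrow> 0 \<le> wt Y p A"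
  unfolding wt_def by simp

lemma EE_mono:
  assumes "0 \<le> p" "p \<le> 1" "\<And>A. A \<subseteq> Y \<Longrightarrow> g A \<le> h A"
  shows "EE Y p g \<le> EE Y p h"
  unfolding EE_def using assms wt_nonneg
  by (intro sum_mono mult_left_mono) auto

lemma expectation_rs:
  fixes g :: "'a set \<Rightarrow> real"
  assumes "finite Y" "0 \<le> p" "p \<le> 1"
  shows "measure_pmf.expectation (random_subset Y p) g = EE Y p g"
proof -
  have "measure_pmf.expectation (random_subset Y p) g = (\<Sum>A\<in>Pow Y. g A * pmf (random_subset Y p) A)"
    using assms set_rs by (intro integral_measure_pmf_real) auto
  also have "\<dots> = EE Y p g" unfolding EE_def
    using assms by (intro sum.cong) (auto simp: pmf_rs)
  finally show ?thesis .
qed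

lemma prob_rs:
  assumes "finite Y" "0 \<le> p" "p \<le> 1"
  shows "measure_pmf.prob (random_subset Y p) S = EE Y p (\<lambda>A. if A \<in> S then 1 else 0)"
proof -
  have "measure_pmf.prob (random_subset Y p) S = measure_pmf.expectation (random_subset Y p) (indicator S)"
    by simp
  also have "\<dots> = EE Y p (indicator S)" by (rule expectation_rs[OF assms])
  also have "indicat_real S = (\<lambda>A. if A \<in> S then 1 else 0)" by (auto simp: indicator_def)
  finally show ?thesis .
qed

lemma exp_neg_le:
  fixes s :: real assumes "s \<ge> 0"
  shows "exp (- s) \<le> 1 - s + s^2/2"
proof -
  let ?g = "\<lambda>t::real. 1 - t + t^2/2 - exp (- t)"
  have "?g 0 \<le> ?g s"
  proof (rule DERIV_nonneg_imp_nondecreasing[OF assms])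
    fix x :: real assume "0 \<le> x" "x \<le> s"
    have "(?g has_real_derivative (- 1 + x + exp (- x))) (at x)"
      by (auto intro!: derivative_eq_intros)
    moreover have "- 1 + x + exp (- x) \<ge> 0" using exp_ge_add_one_self[of "- x"] by linarith
    ultimately show "\<exists>y. (?g has_real_derivative y) (at x) \<and> 0 \<le> y" by blast
  qed
  thus ?thesis by simp
qed

lemma bern_bound:
  fixes p s :: real assumes "0 \<le> p" "p \<le> 1" "0 \<le> s"
  shows "(1 - p) * exp (p * s) + p * exp (- ((1 - p) * s)) \<le> exp (p * s^2 / 2)"
proof -
  have "(1 - p) * exp (p * s) + p * exp (- ((1 - p) * s)) = exp (p * s) * (1 - p + p * exp (- s))"
    by (simp add: algebra_simps flip: exp_add)
  also have "1 - p + p * exp (- s) \<le> 1 - p + p * (1 - s + s^2/2)"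
    using exp_neg_le[OF assms(3)] assms by (intro add_left_mono mult_left_mono) auto
  also have "\<dots> = 1 + (- (p * s) + p * s^2/2)" by (simp add: algebra_simps)
  also have "\<dots> \<le> exp (- (p * s) + p * s^2/2)" by (rule exp_ge_add_one_self)
  also have "exp (p * s) * exp (- (p * s) + p * s^2/2) = exp (p * s^2 / 2)"
    by (simp flip: exp_add)
  finally show ?thesis by simp
qed

lemma pointwise_bound:
  fixes p t d u :: real
  assumes "0 \<le> p" "p \<le> 1" "0 \<le> t" "0 \<le> d" "d \<le> cc"
  shows "(1 - p) * exp (t * (u + p * d)) + p * exp (t * (u - (1 - p) * d))
         \<le> exp (p * t^2 * cc^2 / 2) * exp (t * u)"
proof -
  have "(1 - p) * exp (t * (u + p * d)) + p * exp (t * (u - (1 - p) * d))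
      = exp (t * u) * ((1 - p) * exp (p * (t * d)) + p * exp (- ((1 - p) * (t * d))))"
    by (simp add: algebra_simps flip: exp_add)
  also have "\<dots> \<le> exp (t * u) * exp (p * (t * d)^2 / 2)"
    using bern_bound[of p "t * d"] assms by (intro mult_left_mono) auto
  also have "exp (p * (t * d)^2 / 2) \<le> exp (p * t^2 * cc^2 / 2)"
  proof -
    have "(t * d)^2 \<le> (t * cc)^2" using assms by (intro power_mono mult_left_mono) auto
    hence "p * (t * d)^2 \<le> p * (t * cc)^2" using assms by (intro mult_left_mono) auto
    thus ?thesis by (simp add: power_mult_distrib mult.assoc)
  qed
  finally show ?thesis by (simp add: mult.commute)
qed

lemma mgf_bound:
  fixes f :: "'a set \<Rightarrow> real" and c :: "'a \<Rightarrow> real"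
  assumes "finite Y" "0 \<le> p" "p \<le> 1" "0 \<le> t"
    and "\<And>A y. A \<subseteq> Y \<Longrightarrow> y \<in> Y \<Longrightarrow> y \<notin> A \<Longrightarrow> 0 \<le> f A - f (insert y A) \<and> f A - f (insert y A) \<le> c y"
  shows "EE Y p (\<lambda>A. exp (t * (f A - EE Y p f))) \<le> exp (p * t^2 * (\<Sum>y\<in>Y. (c y)^2) / 2)"
  using assms(1,5)
proof (induction Y arbitrary: f rule: finite_induct)
  case empty
  then show ?case by (simp add: EE_def wt_def)
next
  case (insert y Y)
  define h where "h A = (1 - p) * f A + p * f (insert y A)" for A
  define m where "m = EE Y p h"
  have Ef: "EE (insert y Y) p f = m"
    unfolding m_def h_def using insert.hyps by (simp add: EE_insert EE_lin)
  have hyp: "0 \<le> h A - h (insert z A) \<and> h A - h (insert z A) \<le> c z"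
    if "A \<subseteq> Y" "z \<in> Y" "z \<notin> A" for A z
  proof -
    have z: "z \<noteq> y" using that insert.hyps by auto
    have 1: "0 \<le> f A - f (insert z A) \<and> f A - f (insert z A) \<le> c z"
      using insert.prems[of A z] that by auto
    have 2: "0 \<le> f (insert y A) - f (insert z (insert y A)) \<and> f (insert y A) - f (insert z (insert y A)) \<le> c z"
      using insert.prems[of "insert y A" z] that z by auto
    have eq: "h A - h (insert z A) = (1 - p) * (f A - f (insert z A)) + p * (f (insert y A) - f (insert z (insert y A)))"
      unfolding h_def by (simp add: insert_commute algebra_simps)
    have "0 \<le> (1 - p) * (f A - f (insert z A)) + p * (f (insert y A) - f (insert z (insert y A)))"
      using 1 2 assms by (intro add_nonneg_nonneg mult_nonneg_nonneg) auto
    moreover have "(1 - p) * (f A - f (insert z A)) + p * (f (insert y A) - f (insert z (insert y A))) \<le> (1 - p) * c z + p * c z"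
      using 1 2 assms by (intro add_mono mult_left_mono) auto
    ultimately show ?thesis unfolding eq by (simp add: algebra_simps)
  qed
  have IH: "EE Y p (\<lambda>A. exp (t * (h A - m))) \<le> exp (p * t^2 * (\<Sum>y\<in>Y. (c y)^2) / 2)"
    unfolding m_def by (rule insert.IH) (use hyp in auto)
  have "EE (insert y Y) p (\<lambda>A. exp (t * (f A - EE (insert y Y) p f)))
      = EE Y p (\<lambda>A. (1 - p) * exp (t * (f A - m)) + p * exp (t * (f (insert y A) - m)))"
    unfolding Ef using insert.hyps by (simp add: EE_insert EE_lin)
  also have "\<dots> \<le> EE Y p (\<lambda>A. exp (p * t^2 * (c y)^2 / 2) * exp (t * (h A - m)))"
  proof (rule EE_mono[OF assms(2,3)])
    fix A assume A: "A \<subseteq> Y"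
    define d where "d = f A - f (insert y A)"
    have d: "0 \<le> d" "d \<le> c y" using insert.prems[of A y] A insert.hyps unfolding d_def by auto
    have e1: "f A - m = (h A - m) + p * d" unfolding d_def h_def by (simp add: algebra_simps)
    have e2: "f (insert y A) - m = (h A - m) - (1 - p) * d" unfolding d_def h_def by (simp add: algebra_simps)
    show "(1 - p) * exp (t * (f A - m)) + p * exp (t * (f (insert y A) - m))
          \<le> exp (p * t^2 * (c y)^2 / 2) * exp (t * (h A - m))"
      unfolding e1 e2 by (rule pointwise_bound) (use assms d in auto)
  qed
  also have "\<dots> = exp (p * t^2 * (c y)^2 / 2) * EE Y p (\<lambda>A. exp (t * (h A - m)))"
    by (rule EE_cmult)
  also have "\<dots> \<le> exp (p * t^2 * (c y)^2 / 2) * exp (p * t^2 * (\<Sum>y\<in>Y. (c y)^2) / 2)"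
    by (intro mult_left_mono IH) auto
  also have "\<dots> = exp (p * t^2 * (\<Sum>y\<in>insert y Y. (c y)^2) / 2)"
    using insert.hyps by (simp add: algebra_simps add_divide_distrib flip: exp_add)
  finally show ?case .
qed


lemma sum_boole_real: "finite A \<Longrightarrow> (\<Sum>x\<in>A. if P x then 1 else 0 :: real) = real (card {x\<in>A. P x})"
  by (simp add: sum.If_cases Int_def conj_commute)

lemma sum_sq_bound:
  fixes X Y :: "'a set" and E :: "('a \<times> 'a) set" and l :: real
  assumes "finite X" "finite Y" "E \<subseteq> X \<times> Y" "l \<ge> 0"
    and "\<And>x x'. x \<in> X \<Longrightarrow> x' \<in> X \<Longrightarrow> x \<noteq> x' \<Longrightarrow> real (codegree E x x') \<le> l"
  shows "(\<Sum>y\<in>Y. (real (card {x\<in>X. (x, y) \<in> E}))^2) \<le> real (card E) + l * real (card X)^2"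
proof -
  have nb: "nbhd E x \<subseteq> Y" for x using assms(3) unfolding nbhd_def by auto
  have cy: "real (card {x\<in>X. (x, y) \<in> E}) = (\<Sum>x\<in>X. if (x, y) \<in> E then 1 else 0)" for y
    using assms(1) by (simp add: sum_boole_real)
  have cod: "(\<Sum>y\<in>Y. if (x, y) \<in> E \<and> (x', y) \<in> E then 1 else 0) = real (codegree E x x')" for x x'
  proof -
    have "{y\<in>Y. (x, y) \<in> E \<and> (x', y) \<in> E} = nbhd E x \<inter> nbhd E x'"
      using nb unfolding nbhd_def by blast
    thus ?thesis using assms(2) by (simp add: sum_boole_real codegree_def)
  qed
  have "(\<Sum>y\<in>Y. (real (card {x\<in>X. (x, y) \<in> E}))^2)
      = (\<Sum>y\<in>Y. \<Sum>x\<in>X. \<Sum>x'\<in>X. if (x, y) \<in> E \<and> (x', y) \<in> E then 1 else 0)"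
    unfolding cy power2_eq_square sum_product by (intro sum.cong refl) auto
  also have "\<dots> = (\<Sum>x\<in>X. \<Sum>x'\<in>X. \<Sum>y\<in>Y. if (x, y) \<in> E \<and> (x', y) \<in> E then 1 else 0)"
    by (subst sum.swap) (subst (2) sum.swap, rule refl)
  also have "\<dots> = (\<Sum>x\<in>X. \<Sum>x'\<in>X. real (codegree E x x'))" by (simp add: cod)
  also have "\<dots> = (\<Sum>x\<in>X. real (codegree E x x) + (\<Sum>x'\<in>X - {x}. real (codegree E x x')))"
    using assms(1) by (intro sum.cong refl) (simp add: sum.remove)
  also have "\<dots> \<le> (\<Sum>x\<in>X. real (card (nbhd E x)) + l * real (card X))"
  proof (rule sum_mono)
    fix x assume x: "x \<in> X"
    have "(\<Sum>x'\<in>X - {x}. real (codegree E x x')) \<le> (\<Sum>x'\<in>X - {x}. l)"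
      using x assms(5) by (intro sum_mono) auto
    also have "\<dots> = l * real (card (X - {x}))" by simp
    also have "\<dots> \<le> l * real (card X)"
      using assms(1,4) by (intro mult_left_mono) (auto intro: card_mono)
    finally show "real (codegree E x x) + (\<Sum>x'\<in>X - {x}. real (codegree E x x'))
        \<le> real (card (nbhd E x)) + l * real (card X)" by (simp add: codegree_def)
  qed
  also have "\<dots> = real (\<Sum>x\<in>X. card (nbhd E x)) + l * real (card X)^2"
    by (simp add: sum.distrib power2_eq_square)
  also have "(\<Sum>x\<in>X. card (nbhd E x)) = card E"
  proof -
    have "E = Sigma X (nbhd E)" using assms(3) unfolding nbhd_def by auto
    moreover have "card (Sigma X (nbhd E)) = (\<Sum>x\<in>X. card (nbhd E x))"
      using assms(1,2) nb by (intro card_SigmaI) (auto intro: finite_subset)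
    ultimately show ?thesis by simp
  qed
  finally show ?thesis .
qed

lemma diff_bound:
  fixes X :: "'a set" and E :: "('a \<times> 'a) set"
  assumes "finite X" "y \<notin> A"
  shows "0 \<le> real (card (X - nbhd_set E A)) - real (card (X - nbhd_set E (insert y A)))
    \<and> real (card (X - nbhd_set E A)) - real (card (X - nbhd_set E (insert y A))) \<le> real (card {x\<in>X. (x, y) \<in> E})"
proof -
  let ?B = "X - nbhd_set E A" and ?B' = "X - nbhd_set E (insert y A)"
  have sub: "?B' \<subseteq> ?B" unfolding nbhd_set_def by auto
  have fin: "finite ?B" using assms by auto
  have "card (?B - ?B') = card ?B - card ?B'" by (rule card_Diff_subset[OF finite_subset[OF sub fin] sub])
  moreover have "card ?B' \<le> card ?B" by (rule card_mono[OF fin sub])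
  moreover have "card (?B - ?B') \<le> card {x\<in>X. (x, y) \<in> E}"
    by (rule card_mono) (use assms in \<open>auto simp: nbhd_set_def\<close>)
  ultimately show ?thesis by (simp add: of_nat_diff)
qed


theorem lemma3p4:
  fixes X Y :: "'a set" and E :: "('a \<times> 'a) set" and p l r :: real
  assumes "0 < p" and "p \<le> 1/2" and "l \<ge> 0"
    and "finite X" and "finite Y" and "X \<inter> Y = {}" and "E \<subseteq> X \<times> Y"
    and "\<And>x x'. x \<in> X \<Longrightarrow> x' \<in> X \<Longrightarrow> x \<noteq> x' \<Longrightarrow> real (codegree E x x') \<le> l"
    and "r \<ge> 0"
  shows "measure_pmf.prob (random_subset Y p)
           {A. real (card (X - nbhd_set E A))
               - measure_pmf.expectation (random_subset Y p) (\<lambda>A. real (card (X - nbhd_set E A))) \<ge> r}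
         \<le> exp (- (r^2 / (4 * p * (real (card E) + l * real (card X)^2))))"
proof -
  define D where "D = real (card E) + l * real (card X)^2"
  define f where "f A = real (card (X - nbhd_set E A))" for A
  define c where "c y = real (card {x\<in>X. (x, y) \<in> E})" for y
  define V where "V = (\<Sum>y\<in>Y. (c y)^2)"
  have p0: "0 \<le> p" and p1: "p \<le> 1" using assms by auto
  have VD: "V \<le> D" unfolding V_def D_def c_def by (rule sum_sq_bound) (use assms in auto)
  have D0: "0 \<le> D" unfolding D_def using assms by auto
  show ?thesis
  proof (cases "D = 0")
    case True
    then show ?thesis unfolding D_def[symmetric] using measure_pmf.prob_le_1 by simp
  next
    case False
    hence Dpos: "D > 0" using D0 by auto
    define m where "m = EE Y p f"
    define t where "t = r / (p * D)"
    have t0: "0 \<le> t" unfolding t_def using assms Dpos by auto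
    have "measure_pmf.prob (random_subset Y p)
           {A. real (card (X - nbhd_set E A))
               - measure_pmf.expectation (random_subset Y p) (\<lambda>A. real (card (X - nbhd_set E A))) \<ge> r}
        = EE Y p (\<lambda>A. if f A - m \<ge> r then 1 else 0)"
      unfolding f_def[symmetric] m_def using assms p1
      by (simp add: expectation_rs prob_rs)
    also have "\<dots> \<le> EE Y p (\<lambda>A. exp (- (t * r)) * exp (t * (f A - m)))"
    proof (rule EE_mono[OF p0 p1])
      fix A
      show "(if f A - m \<ge> r then 1 else 0) \<le> exp (- (t * r)) * exp (t * (f A - m))"
      proof (cases "f A - m \<ge> r")
        case True
        have "0 \<le> t * (f A - m - r)" using True t0 by auto
        hence "1 \<le> exp (t * (f A - m - r))" by simp
        also have "\<dots> = exp (- (t * r)) * exp (t * (f A - m))"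
          by (simp add: algebra_simps flip: exp_add)
        finally show ?thesis using True by simp
      qed auto
    qed
    also have "\<dots> = exp (- (t * r)) * EE Y p (\<lambda>A. exp (t * (f A - m)))" by (rule EE_cmult)
    also have "\<dots> \<le> exp (- (t * r)) * exp (p * t^2 * V / 2)"
      unfolding m_def V_def
    proof (intro mult_left_mono mgf_bound)
      fix A y assume "A \<subseteq> Y" "y \<in> Y" "y \<notin> A"
      then show "0 \<le> f A - f (insert y A) \<and> f A - f (insert y A) \<le> c y"
        unfolding f_def c_def using assms(4) by (intro diff_bound) auto
    qed (use assms p1 t0 in auto)
    also have "\<dots> \<le> exp (- (t * r)) * exp (p * t^2 * D / 2)"
      using VD assms(1) by (intro mult_left_mono) (auto intro!: mult_left_mono divide_right_mono)
    also have "\<dots> = exp (- (r^2 / (2 * p * D)))"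
      unfolding t_def using assms(1) Dpos
      by (simp add: field_simps power2_eq_square flip: exp_add)
    also have "\<dots> \<le> exp (- (r^2 / (4 * p * D)))"
      using assms(1) Dpos by (auto intro!: divide_left_mono mult_pos_pos)
    finally show ?thesis unfolding D_def .
  qed
qed

end
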